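(* Suppose $v_{j1}^2+v_{j2}^2\neq0$ for $j=1$ and for $j=2$. Then, in the coordinates $[z_0,z_1,z_2,z_3,x]$, the points of $HC_F(\mathbf v,d)$ with $z_0z_1=0$ are exactly the eight points $[-1,0,1,0,0]$, $[0,-1,0,1,0]$, $[0,1,0,1,0]$, $[1,0,1,0,0]$, $[0,0,1,1,\sqrt{-1}]$, $[0,0,1,1,-\sqrt{-1}]$, $[0,0,1,-1,\sqrt{-1}]$, $[0,0,1,-1,-\sqrt{-1}]$. Equivalently, in the coordinates $[u,y_1,y_2,r_1,r_2]$, the set of points of $HC_F(\mathbf v,d)$ with $r_1r_2=0$ is this set of eight points.
   Context: On $\mathbb{C}P^4$ use homogeneous coordinates $[u,y_1,y_2,r_1,r_2]$ and the linearly equivalent coordinates $z_0=4r_1$, $z_1=4r_2$, $z_2=4(u-y_1)$, $z_3=-4(u+y_1)$, $x=-4y_2$. For parameters $[\mathbf v,d]=[v_{11},v_{12},v_{21},v_{22},d]\in\mathbb{C}P^4$ (complex, not all zero), $HC_F(\mathbf v,d)$ is defined by $z_2^2-z_0^2-(z_3^2-z_1^2)=0$, $x^2+z_2^2-z_0^2=0$, and $(v_{22}z_0-v_{12}z_1)x+v_{21}z_0z_3-v_{11}z_1z_2-dz_0z_1=0$; in the original coordinates these are $(u-y_1)^2+y_2^2=r_1^2$, $(u+y_1)^2+y_2^2=r_2^2$, and $L_2r_1-L_1r_2-dr_1r_2=0$ with $L_1=v_{11}(u-y_1)-v_{12}y_2$, $L_2=-v_{21}(u+y_1)-v_{22}y_2$.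 *)

theory Defs
  imports Complex_Main
begin

(* Points of CP^4 are represented by nonzero vectors of homogeneous coordinates
   in C^5; a projective point corresponds to the punctured line (cone) of its
   representatives.  Tuples are (z0,z1,z2,z3,x) resp. (u,y1,y2,r1,r2). *)
type_synonym hvec = "complex \<times> complex \<times> complex \<times> complex \<times> complex"

definition hscale :: "complex \<Rightarrow> hvec \<Rightarrow> hvec" where
  "hscale c p = (case p of (a0,a1,a2,a3,a4) \<Rightarrow> (c*a0, c*a1, c*a2, c*a3, c*a4))"

definition proj_cone :: "hvec set \<Rightarrow> hvec set" where
  "proj_cone S = {hscale c q | c q. c \<noteq> 0 \<and> q \<in> S}"

definition HCF :: "complex \<times> complex \<times> complex \<times> complex \<Rightarrow> complex \<Rightarrow> hvec set" where
  "HCF v d = (case v of (v11,v12,v21,v22) \<Rightarrow>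
     {(z0,z1,z2,z3,x). (z0,z1,z2,z3,x) \<noteq> (0,0,0,0,0) \<and>
        z2^2 - z0^2 - (z3^2 - z1^2) = 0 \<and>
        x^2 + z2^2 - z0^2 = 0 \<and>
        (v22*z0 - v12*z1)*x + v21*z0*z3 - v11*z1*z2 - d*z0*z1 = 0})"

definition to_z :: "hvec \<Rightarrow> hvec" where
  "to_z w = (case w of (u,y1,y2,r1,r2) \<Rightarrow> (4*r1, 4*r2, 4*(u-y1), -4*(u+y1), -4*y2))"

definition eight_pts :: "hvec set" where
  "eight_pts = {(-1,0,1,0,0), (0,-1,0,1,0), (0,1,0,1,0), (1,0,1,0,0),
                (0,0,1,1,\<i>), (0,0,1,1,-\<i>), (0,0,1,-1,\<i>), (0,0,1,-1,-\<i>)}"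

end

theory Submission
  imports Defs
begin

lemma sq_eq: "(a::complex)^2 = b^2 \<Longrightarrow> a = b \<or> a = -b"
  by (simp add: power2_eq_iff)

lemma hs: "c \<noteq> 0 \<Longrightarrow> q \<in> eight_pts \<Longrightarrow> hscale c q \<in> proj_cone eight_pts"
  unfolding proj_cone_def by blast

lemma fwd:
  fixes v11 v12 v21 v22 d :: complex
  assumes h1: "v11^2 + v12^2 \<noteq> 0" and h2: "v21^2 + v22^2 \<noteq> 0"
  and p: "(z0,z1,z2,z3,x) \<in> HCF (v11,v12,v21,v22) d" and z: "z0*z1 = 0"
  shows "(z0,z1,z2,z3,x) \<in> proj_cone eight_pts"
proof -
  have nz: "(z0,z1,z2,z3,x) \<noteq> (0,0,0,0,0)"
   and e1: "z2^2 - z0^2 - (z3^2 - z1^2) = 0"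
   and e2: "x^2 + z2^2 - z0^2 = 0"
   and e3: "(v22*z0 - v12*z1)*x + v21*z0*z3 - v11*z1*z2 - d*z0*z1 = 0"
    using p unfolding HCF_def by auto
  show ?thesis
  proof (cases "z0 = 0")
    case z0: True
    show ?thesis
    proof (cases "z1 = 0")
      case z1: True
      have z2: "z2 \<noteq> 0"
      proof
        assume "z2 = 0"
        then have "z3^2 = 0" "x^2 = 0" using e1 e2 z0 z1 by auto
        then show False using nz z0 z1 \<open>z2 = 0\<close> by auto
      qed
      have "z3^2 = z2^2" using e1 z0 z1 by simp
      then have a: "z3 = z2 \<or> z3 = -z2" using sq_eq by blast
      have "x^2 = (\<i>*z2)^2" using e2 z0 by (simp add: power_mult_distrib eq_neg_iff_add_eq_0)
      then have b: "x = z2*\<i> \<or> x = -z2*\<i>" using sq_eq by (auto simp: mult.commute)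
      from a b consider "z3 = z2" "x = z2*\<i>" | "z3 = z2" "x = -z2*\<i>"
        | "z3 = -z2" "x = z2*\<i>" | "z3 = -z2" "x = -z2*\<i>" by blast
      then show ?thesis
      proof cases
        case 1
        then have eq: "(z0,z1,z2,z3,x) = hscale z2 (0,0,1,1,\<i>)" using z0 z1 by (simp add: hscale_def)
        have "hscale z2 (0,0,1,1,\<i>) \<in> proj_cone eight_pts" using hs[OF z2] by (simp add: eight_pts_def)
        then show ?thesis unfolding eq .
      next
        case 2
        then have eq: "(z0,z1,z2,z3,x) = hscale z2 (0,0,1,1,-\<i>)" using z0 z1 by (simp add: hscale_def)
        have "hscale z2 (0,0,1,1,-\<i>) \<in> proj_cone eight_pts" using hs[OF z2] by (simp add: eight_pts_def)
        then show ?thesis unfolding eq .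
      next
        case 3
        then have eq: "(z0,z1,z2,z3,x) = hscale z2 (0,0,1,-1,\<i>)" using z0 z1 by (simp add: hscale_def)
        have "hscale z2 (0,0,1,-1,\<i>) \<in> proj_cone eight_pts" using hs[OF z2] by (simp add: eight_pts_def)
        then show ?thesis unfolding eq .
      next
        case 4
        then have eq: "(z0,z1,z2,z3,x) = hscale z2 (0,0,1,-1,-\<i>)" using z0 z1 by (simp add: hscale_def)
        have "hscale z2 (0,0,1,-1,-\<i>) \<in> proj_cone eight_pts" using hs[OF z2] by (simp add: eight_pts_def)
        then show ?thesis unfolding eq .
      qed
    next
      case z1: False
      have e3': "v12*x + v11*z2 = 0"
      proof -
        have "z1 * (v12*x + v11*z2) = -((v22*z0 - v12*z1)*x + v21*z0*z3 - v11*z1*z2 - d*z0*z1)"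
          using z0 by (simp add: algebra_simps)
        then have "z1 * (v12*x + v11*z2) = 0" using e3 by simp
        then show ?thesis using z1 by simp
      qed
      have "x^2 = (\<i>*z2)^2" using e2 z0 by (simp add: power_mult_distrib eq_neg_iff_add_eq_0)
      then have b: "x = z2*\<i> \<or> x = -z2*\<i>" using sq_eq by (auto simp: mult.commute)
      have z2: "z2 = 0"
      proof (rule ccontr)
        assume nz2: "z2 \<noteq> 0"
        from b have "v12*\<i> + v11 = 0 \<or> -v12*\<i> + v11 = 0"
        proof
          assume "x = z2*\<i>"
          then have "z2*(v12*\<i> + v11) = 0" using e3' by (simp add: algebra_simps)
          then show ?thesis using nz2 by simp
        next
          assume "x = -z2*\<i>"
          then have "z2*(-v12*\<i> + v11) = 0" using e3' by (simp add: algebra_simps)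
          then show ?thesis using nz2 by simp
        qed
        moreover have "v11^2 + v12^2 = (v12*\<i> + v11)*(-v12*\<i> + v11)"
          by (simp add: algebra_simps power2_eq_square)
        ultimately have "v11^2 + v12^2 = 0" by auto
        then show False using h1 by simp
      qed
      have x: "x = 0" using b z2 by simp
      have "z3^2 = z1^2" using e1 z0 z2 by simp
      then have a: "z3 = z1 \<or> z3 = -z1" using sq_eq by blast
      from a show ?thesis
      proof
        assume "z3 = z1"
        then have eq: "(z0,z1,z2,z3,x) = hscale z1 (0,1,0,1,0)" using z0 z2 x by (simp add: hscale_def)
        have "hscale z1 (0,1,0,1,0) \<in> proj_cone eight_pts" using hs[OF z1] by (simp add: eight_pts_def)
        then show ?thesis unfolding eq .
      next
        assume "z3 = -z1"
        then have eq: "(z0,z1,z2,z3,x) = hscale (-z1) (0,-1,0,1,0)" using z0 z2 x by (simp add: hscale_def)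
        have "hscale (-z1) (0,-1,0,1,0) \<in> proj_cone eight_pts" using hs[of "-z1"] z1 by (simp add: eight_pts_def)
        then show ?thesis unfolding eq .
      qed
    qed
  next
    case z0: False
    then have z1: "z1 = 0" using z by simp
    have e3': "v22*x + v21*z3 = 0"
    proof -
      have "z0 * (v22*x + v21*z3) = 0" using e3 z1 by (simp add: algebra_simps)
      then show ?thesis using z0 by simp
    qed
    have "x^2 + z3^2 = 0" using e1 e2 z1 by (simp add: algebra_simps)
    then have "x^2 = (\<i>*z3)^2" by (simp add: power_mult_distrib eq_neg_iff_add_eq_0)
    then have b: "x = z3*\<i> \<or> x = -z3*\<i>" using sq_eq by (auto simp: mult.commute)
    have z3: "z3 = 0"
    proof (rule ccontr)
      assume nz3: "z3 \<noteq> 0"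
      from b have "v22*\<i> + v21 = 0 \<or> -v22*\<i> + v21 = 0"
      proof
        assume "x = z3*\<i>"
        then have "z3*(v22*\<i> + v21) = 0" using e3' by (simp add: algebra_simps)
        then show ?thesis using nz3 by simp
      next
        assume "x = -z3*\<i>"
        then have "z3*(-v22*\<i> + v21) = 0" using e3' by (simp add: algebra_simps)
        then show ?thesis using nz3 by simp
      qed
      moreover have "v21^2 + v22^2 = (v22*\<i> + v21)*(-v22*\<i> + v21)"
        by (simp add: algebra_simps power2_eq_square)
      ultimately have "v21^2 + v22^2 = 0" by auto
      then show False using h2 by simp
    qed
    have x: "x = 0" using b z3 by simp
    have "z2^2 = z0^2" using e1 z1 z3 by simp
    then have a: "z2 = z0 \<or> z2 = -z0" using sq_eq by blast
    from a show ?thesis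
    proof
      assume "z2 = z0"
      then have eq: "(z0,z1,z2,z3,x) = hscale z0 (1,0,1,0,0)" using z1 z3 x by (simp add: hscale_def)
      have "hscale z0 (1,0,1,0,0) \<in> proj_cone eight_pts" using hs[OF z0] by (simp add: eight_pts_def)
      then show ?thesis unfolding eq .
    next
      assume "z2 = -z0"
      then have eq: "(z0,z1,z2,z3,x) = hscale (-z0) (-1,0,1,0,0)" using z1 z3 x by (simp add: hscale_def)
      have "hscale (-z0) (-1,0,1,0,0) \<in> proj_cone eight_pts" using hs[of "-z0"] z0 by (simp add: eight_pts_def)
      then show ?thesis unfolding eq .
    qed
  qed
qed

lemma bwd:
  assumes "p \<in> proj_cone eight_pts"
  shows "p \<in> HCF (v11,v12,v21,v22) d \<and> fst p * fst (snd p) = 0"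
proof -
  obtain c q where p: "p = hscale c q" and c: "c \<noteq> 0" and q: "q \<in> eight_pts"
    using assms unfolding proj_cone_def by blast
  from q show ?thesis unfolding eight_pts_def
    by (elim insertE emptyE) (simp_all add: p c hscale_def HCF_def power_mult_distrib)
qed

lemma part1:
  fixes v11 v12 v21 v22 d :: complex
  assumes "v11^2 + v12^2 \<noteq> 0" and "v21^2 + v22^2 \<noteq> 0"
  shows "{p \<in> HCF (v11,v12,v21,v22) d. fst p * fst (snd p) = 0} = proj_cone eight_pts"
proof safe
  fix z0 z1 z2 z3 x assume "(z0,z1,z2,z3,x) \<in> HCF (v11,v12,v21,v22) d"
    "fst (z0,z1,z2,z3,x) * fst (snd (z0,z1,z2,z3,x)) = 0"
  then show "(z0,z1,z2,z3,x) \<in> proj_cone eight_pts" using fwd[OF assms] by simp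
next
  fix z0 z1 z2 z3 x assume "(z0,z1,z2,z3,x) \<in> proj_cone eight_pts"
  then show "(z0,z1,z2,z3,x) \<in> HCF (v11,v12,v21,v22) d" using bwd by blast
next
  fix z0 z1 z2 z3 x assume "(z0,z1,z2,z3,x) \<in> proj_cone eight_pts"
  then show "fst (z0,z1,z2,z3,x) * fst (snd (z0,z1,z2,z3,x)) = 0" using bwd[of "(z0,z1,z2,z3,x)"] by simp
qed

theorem lemma5p7:
  fixes v11 v12 v21 v22 d :: complex
  assumes "v11^2 + v12^2 \<noteq> 0" and "v21^2 + v22^2 \<noteq> 0"
  shows "{p \<in> HCF (v11,v12,v21,v22) d. fst p * fst (snd p) = 0} = proj_cone eight_pts
       \<and> {w. w \<noteq> (0,0,0,0,0) \<and> to_z w \<in> HCF (v11,v12,v21,v22) d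
              \<and> fst (snd (snd (snd w))) * snd (snd (snd (snd w))) = 0}
         = {w. to_z w \<in> proj_cone eight_pts}"
proof
  note P = part1[OF assms]
  show "{p \<in> HCF (v11,v12,v21,v22) d. fst p * fst (snd p) = 0} = proj_cone eight_pts" by (rule P)
  have key: "w \<noteq> (0,0,0,0,0) \<and> to_z w \<in> HCF (v11,v12,v21,v22) d
              \<and> fst (snd (snd (snd w))) * snd (snd (snd (snd w))) = 0
     \<longleftrightarrow> to_z w \<in> proj_cone eight_pts" for w
  proof -
    obtain u y1 y2 r1 r2 where w: "w = (u,y1,y2,r1,r2)" by (cases w) auto
    have tz: "to_z w = (4*r1, 4*r2, 4*(u-y1), -4*(u+y1), -4*y2)" unfolding w to_z_def by simp
    have z0: "to_z (0,0,0,0,0) = (0,0,0,0,0)" unfolding to_z_def by simp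
    have "to_z w \<in> HCF (v11,v12,v21,v22) d \<Longrightarrow> w \<noteq> (0,0,0,0,0)"
      using z0 unfolding HCF_def by auto
    moreover have "to_z w \<in> proj_cone eight_pts \<Longrightarrow> w \<noteq> (0,0,0,0,0)"
    proof
      assume a: "to_z w \<in> proj_cone eight_pts" "w = (0,0,0,0,0)"
      then have "(0,0,0,0,0) \<in> HCF (v11,v12,v21,v22) d" using z0 bwd[of "(0,0,0,0,0)"] by simp
      then show False unfolding HCF_def by simp
    qed
    moreover have "(r1*r2 = 0) = ((4*r1)*(4*r2) = 0)" by simp
    moreover have "(fst (snd (snd (snd w))) * snd (snd (snd (snd w))) = 0) = (fst (to_z w) * fst (snd (to_z w)) = 0)"
      unfolding w to_z_def by simp
    moreover have "(to_z w \<in> HCF (v11,v12,v21,v22) d \<and> fst (to_z w) * fst (snd (to_z w)) = 0) = (to_z w \<in> proj_cone eight_pts)"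
      using P by blast
    ultimately show ?thesis by blast
  qed
  show "{w. w \<noteq> (0,0,0,0,0) \<and> to_z w \<in> HCF (v11,v12,v21,v22) d
              \<and> fst (snd (snd (snd w))) * snd (snd (snd (snd w))) = 0}
         = {w. to_z w \<in> proj_cone eight_pts}" using key by blast
qed

end
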